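(* Let $a\ge b\ge1$ be integers with either $b\ge2$, or $b=1$ and $a\ge5$, and $A=\begin{pmatrix}2&-a\\-b&2\end{pmatrix}$. Then: (1) if $j\in\mathbb Z_+$, $k\ge1$ and $j\equiv k\pmod 2$, then $(\beta_1^j,\beta_2^k)=(\beta_1^{j+1},\beta_2^{k-1})$; (2) the sequence $\langle\beta_1^{2k},(\beta_2^0)^\vee\rangle$, $k\in\mathbb Z_+$, is decreasing, and strictly decreasing if $ab>4$; (3) $a\langle\beta_2^{2k},(\beta_1^0)^\vee\rangle=b\langle\beta_1^{2k},(\beta_2^0)^\vee\rangle$ for all $k\in\mathbb Z_+$.
   Context: Let $\mathfrak g(A)$ have simple roots $\alpha_1,\alpha_2$, invariant symmetric bilinear form $(\cdot,\cdot)$ with $(\alpha_1,\alpha_1)=2$, $(\alpha_2,\alpha_2)=2a/b$, $(\alpha_1,\alpha_2)=-a$, and for a real root $\beta$ let $\langle\lambda,\beta^\vee\rangle=2(\lambda,\beta)/(\beta,\beta)$. $\mathbb Z_+=\{0,1,2,\dots\}$. Define $c_0=d_0=0$, $c_1=d_1=1$, $c_{k+2}+c_k=a d_{k+1}$, $d_{k+2}+d_k=b c_{k+1}$, and $\beta_1^j=c_j\alpha_1+d_{j+1}\alpha_2$, $\beta_2^j=c_{j+1}\alpha_1+d_j\alpha_2$. *)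

theory Defs
  imports Complex_Main
begin

text \<open>Elements of the root lattice are represented by their coordinates
  (x1, x2) meaning x1 * alpha1 + x2 * alpha2.\<close>

type_synonym rlat = "int \<times> int"

definition alpha1 :: rlat where "alpha1 = (1, 0)"
definition alpha2 :: rlat where "alpha2 = (0, 1)"

text \<open>Invariant symmetric bilinear form: (alpha1,alpha1)=2, (alpha2,alpha2)=2a/b,
  (alpha1,alpha2)=-a.\<close>
definition bform :: "int \<Rightarrow> int \<Rightarrow> rlat \<Rightarrow> rlat \<Rightarrow> real" where
  "bform a b x y =
     2 * of_int (fst x) * of_int (fst y)
   - of_int a * (of_int (fst x) * of_int (snd y) + of_int (snd x) * of_int (fst y))
   + (2 * of_int a / of_int b) * of_int (snd x) * of_int (snd y)"

definition copair :: "int \<Rightarrow> int \<Rightarrow> rlat \<Rightarrow> rlat \<Rightarrow> real" where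
  "copair a b lam beta = 2 * bform a b lam beta / bform a b beta beta"

fun cdseq :: "int \<Rightarrow> int \<Rightarrow> nat \<Rightarrow> int \<times> int" where
  "cdseq a b 0 = (0, 0)"
| "cdseq a b (Suc 0) = (1, 1)"
| "cdseq a b (Suc (Suc k)) =
     (a * snd (cdseq a b (Suc k)) - fst (cdseq a b k),
      b * fst (cdseq a b (Suc k)) - snd (cdseq a b k))"

definition cseq :: "int \<Rightarrow> int \<Rightarrow> nat \<Rightarrow> int" where "cseq a b k = fst (cdseq a b k)"
definition dseq :: "int \<Rightarrow> int \<Rightarrow> nat \<Rightarrow> int" where "dseq a b k = snd (cdseq a b k)"

definition beta1 :: "int \<Rightarrow> int \<Rightarrow> nat \<Rightarrow> rlat" where
  "beta1 a b j = (cseq a b j, dseq a b (Suc j))"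
definition beta2 :: "int \<Rightarrow> int \<Rightarrow> nat \<Rightarrow> rlat" where
  "beta2 a b j = (cseq a b (Suc j), dseq a b j)"

end

theory Submission
  imports Defs
begin

fun ef :: "int \<Rightarrow> nat \<Rightarrow> int \<times> int" where
  "ef t 0 = (0, 1)"
| "ef t (Suc m) = (snd (ef t m) - fst (ef t m), t * (snd (ef t m) - fst (ef t m)) - snd (ef t m))"

definition EE :: "int \<Rightarrow> nat \<Rightarrow> int" where "EE t m = fst (ef t m)"
definition FF :: "int \<Rightarrow> nat \<Rightarrow> int" where "FF t m = snd (ef t m)"

lemma EE_0[simp]: "EE t 0 = 0" and FF_0[simp]: "FF t 0 = 1"
  by (simp_all add: EE_def FF_def)

lemma EE_Suc: "EE t (Suc m) = FF t m - EE t m"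
  and FF_Suc: "FF t (Suc m) = t * (FF t m - EE t m) - FF t m"
  by (simp_all add: EE_def FF_def)

lemma cd_form:
  "cdseq a b (2*m) = (a * EE (a*b) m, b * EE (a*b) m) \<and> cdseq a b (Suc (2*m)) = (FF (a*b) m, FF (a*b) m)"
proof (induction m)
  case 0
  then show ?case by simp
next
  case (Suc m)
  have e: "2 * Suc m = Suc (Suc (2*m))" by simp
  have 1: "cdseq a b (2 * Suc m) = (a * EE (a*b) (Suc m), b * EE (a*b) (Suc m))"
    unfolding e using Suc.IH by (simp add: EE_Suc algebra_simps)
  have 2: "cdseq a b (Suc (2 * Suc m)) = (FF (a*b) (Suc m), FF (a*b) (Suc m))"
    using Suc.IH 1 unfolding e by (simp add: EE_Suc FF_Suc algebra_simps)
  show ?case using 1 2 by simp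
qed

lemma cs_even[simp]: "cseq a b (2*m) = a * EE (a*b) m"
  and ds_even[simp]: "dseq a b (2*m) = b * EE (a*b) m"
  and cs_odd[simp]: "cseq a b (Suc (2*m)) = FF (a*b) m"
  and ds_odd[simp]: "dseq a b (Suc (2*m)) = FF (a*b) m"
  using cd_form[of a b m] by (simp_all add: cseq_def dseq_def)

lemma cs_even2[simp]: "cseq a b (Suc (Suc (2*m))) = a * EE (a*b) (Suc m)"
  and ds_even2[simp]: "dseq a b (Suc (Suc (2*m))) = b * EE (a*b) (Suc m)"
  using cs_even[of a b "Suc m"] ds_even[of a b "Suc m"] by simp_all

lemma cs_odd2[simp]: "cseq a b (Suc (Suc (Suc (2*m)))) = FF (a*b) (Suc m)"
  and ds_odd2[simp]: "dseq a b (Suc (Suc (Suc (2*m)))) = FF (a*b) (Suc m)"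
  using cs_odd[of a b "Suc m"] ds_odd[of a b "Suc m"] by simp_all

lemma pos_EF:
  assumes "t \<ge> 4"
  shows "EE t m \<ge> 0 \<and> FF t m \<ge> 2 * EE t m + 1"
proof (induction m)
  case 0
  then show ?case by simp
next
  case (Suc m)
  define e where "e = EE t m"
  define f where "f = FF t m"
  define e' where "e' = f - e"
  have h: "e \<ge> 0" "f \<ge> 2*e+1" using Suc.IH by (simp_all add: e_def f_def)
  have "e' \<ge> e + 1" using h by (simp add: e'_def)
  moreover have "(t - 4) * e' \<ge> 0" using assms h by (simp add: e'_def)
  ultimately have "t * e' - f \<ge> 2 * e' + 1" using h by (simp add: e'_def algebra_simps)
  then show ?case using h
    by (simp add: EE_Suc FF_Suc e_def[symmetric] f_def[symmetric] e'_def[symmetric]) (simp add: e'_def)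
qed

lemma t_ge4:
  fixes a b :: int
  assumes "a \<ge> b" and "b \<ge> 1" and "b \<ge> 2 \<or> (b = 1 \<and> a \<ge> 5)"
  shows "a * b \<ge> 4" and "a * b > 4 \<or> a * b = 4"
proof -
  have "a * b \<ge> 4"
  proof (cases "b \<ge> 2")
    case True
    have "2 * 2 \<le> a * b" using True assms(1) by (intro mult_mono) auto
    then show ?thesis by simp
  next
    case False
    then have "b = 1" using assms by auto
    then show ?thesis using assms by simp
  qed
  then show "a * b \<ge> 4" "a * b > 4 \<or> a * b = 4" by auto
qed

lemma bform_mult:
  assumes "real_of_int b \<noteq> 0"
  shows "real_of_int b * bform a b x y = of_int (2 * b * fst x * fst y - a * b * (fst x * snd y + snd x * fst y) + 2 * a * snd x * snd y)"
  using assms by (simp add: bform_def field_simps)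

theorem lemma3p10:
  fixes a b :: int
  assumes "a \<ge> b" and "b \<ge> 1" and "b \<ge> 2 \<or> (b = 1 \<and> a \<ge> 5)"
  shows "(\<forall>j k::nat. k \<ge> 1 \<longrightarrow> even j = even k \<longrightarrow>
            bform a b (beta1 a b j) (beta2 a b k) = bform a b (beta1 a b (Suc j)) (beta2 a b (k - 1)))
       \<and> (\<forall>k::nat. copair a b (beta1 a b (2 * Suc k)) (beta2 a b 0) \<le> copair a b (beta1 a b (2 * k)) (beta2 a b 0))
       \<and> (a * b > 4 \<longrightarrow> (\<forall>k::nat. copair a b (beta1 a b (2 * Suc k)) (beta2 a b 0) < copair a b (beta1 a b (2 * k)) (beta2 a b 0)))
       \<and> (\<forall>k::nat. of_int a * copair a b (beta2 a b (2 * k)) (beta1 a b 0) = of_int b * copair a b (beta1 a b (2 * k)) (beta2 a b 0))"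
proof -
  have b0: "real_of_int b \<noteq> 0" using assms by simp
  have a0: "a \<ge> 1" using assms by simp
  have t4: "a * b \<ge> 4" using t_ge4[OF assms] by simp
  have b20: "beta2 a b 0 = (1, 0)"
    using cs_odd[of a b 0] ds_even[of a b 0] by (simp add: beta2_def)
  have b10: "beta1 a b 0 = (0, 1)"
    using cs_even[of a b 0] ds_odd[of a b 0] by (simp add: beta1_def)
  have cp1: "copair a b x (1,0) = 2 * of_int (fst x) - of_int a * of_int (snd x)" for x
    by (simp add: copair_def bform_def)
  have cp2: "copair a b x (0,1) = (2 * of_int a / of_int b * of_int (snd x) - of_int a * of_int (fst x)) * of_int b / of_int a" for x
    using a0 b0 by (simp add: copair_def bform_def field_simps)
  have P1: "bform a b (beta1 a b j) (beta2 a b k) = bform a b (beta1 a b (Suc j)) (beta2 a b (k - 1))"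
    if "k \<ge> 1" "even j = even k" for j k
  proof -
    have "of_int b * bform a b (beta1 a b j) (beta2 a b k) = of_int b * bform a b (beta1 a b (Suc j)) (beta2 a b (k - 1))"
    proof (cases "even j")
      case True
      then obtain p where p: "j = 2*p" by (auto elim: evenE)
      from True that obtain r where r: "k = 2*r" by (auto elim: evenE)
      with that have "r \<noteq> 0" by auto
      then obtain q where "r = Suc q" using not0_implies_Suc by blast
      with r have q: "k = 2 * Suc q" by simp
      have kq: "k - 1 = Suc (2*q)" using q by simp
      show ?thesis
        unfolding kq unfolding p q bform_mult[OF b0]
        by (simp only: beta1_def beta2_def fst_conv snd_conv cs_even cs_odd ds_even ds_odd cs_even2 ds_even2 cs_odd2 ds_odd2 EE_Suc FF_Suc of_int_eq_iff) algebra
    next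
      case False
      then obtain p where p: "j = Suc (2*p)" by (metis oddE Suc_eq_plus1 add.commute)
      from False that obtain q where q: "k = Suc (2*q)" by (metis oddE Suc_eq_plus1 add.commute)
      show ?thesis
        unfolding p q bform_mult[OF b0] diff_Suc_1
        by (simp only: beta1_def beta2_def fst_conv snd_conv cs_even cs_odd ds_even ds_odd cs_even2 ds_even2 cs_odd2 ds_odd2 EE_Suc FF_Suc of_int_eq_iff) algebra
    qed
    then show ?thesis using b0 by simp
  qed
  have P2: "copair a b (beta1 a b (2 * k)) (beta2 a b 0) - copair a b (beta1 a b (2 * Suc k)) (beta2 a b 0)
      = of_int (a * (a*b - 4) * (FF (a*b) k - EE (a*b) k))" for k
    unfolding b20 cp1 beta1_def
    by (simp only: fst_conv snd_conv cs_even cs_odd ds_even ds_odd cs_even2 ds_even2 cs_odd2 ds_odd2 EE_Suc FF_Suc) (simp add: algebra_simps)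
  have nn: "FF (a*b) k - EE (a*b) k \<ge> 1" for k using pos_EF[OF t4, of k] by simp
  have Q2: "copair a b (beta1 a b (2 * Suc k)) (beta2 a b 0) \<le> copair a b (beta1 a b (2 * k)) (beta2 a b 0)" for k
  proof -
    have "a * (a*b - 4) * (FF (a*b) k - EE (a*b) k) \<ge> 0" using a0 t4 nn[of k] by simp
    then show ?thesis using P2[of k] by linarith
  qed
  have Q3: "copair a b (beta1 a b (2 * Suc k)) (beta2 a b 0) < copair a b (beta1 a b (2 * k)) (beta2 a b 0)"
    if "a * b > 4" for k
  proof -
    have "a * (a*b - 4) * (FF (a*b) k - EE (a*b) k) > 0" using a0 that nn[of k] by simp
    then show ?thesis using P2[of k] by linarith
  qed
  have Q4: "of_int a * copair a b (beta2 a b (2 * k)) (beta1 a b 0) = of_int b * copair a b (beta1 a b (2 * k)) (beta2 a b 0)" for k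
    unfolding b20 b10 unfolding cp1 cp2 beta1_def beta2_def
    using a0 b0 by (simp only: fst_conv snd_conv cs_even cs_odd ds_even ds_odd) (simp add: field_simps)
  show ?thesis using P1 Q2 Q3 Q4 by blast
qed

end
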